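(* Let $\mathbb{K}\in\{\mathbb{R},\mathbb{C}\}$ and let $\mathcal{X}$ be an infinite-dimensional topological $\mathbb{K}$-vector space whose topological dual $\mathcal{X}^{\ast}$ separates the points of $\mathcal{X}$. Then $\mathbf{F}(\mathcal{X}^{\ast})$, endowed with the weak*-Hausdorff hypertopology, is not locally connected.
   Context: Topological vector spaces are Hausdorff. $\mathcal{X}^{\ast}$ carries the weak* topology. $\mathbf{F}(\mathcal{X}^{\ast})$ is the set of nonempty weak*-closed subsets of $\mathcal{X}^{\ast}$. The weak*-Hausdorff hypertopology on $\mathbf{F}(\mathcal{X}^{\ast})$ is the topology generated by the family of extended pseudometrics $d_H^{(A)}(F,\tilde F)=\max\{\sup_{\sigma\in F}\inf_{\tilde\sigma\in\tilde F}|(\sigma-\tilde\sigma)(A)|,\ \sup_{\tilde\sigma\in\tilde F}\inf_{\sigma\in F}|(\sigma-\tilde\sigma)(A)|\}\in[0,\infty]$, $A\in\mathcal{X}$. *)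

theory Defs
  imports "HOL-Analysis.Analysis"
begin

text \<open>A (Hausdorff) topological vector space over the field 'k: the carrier is the type 'a
  (an abelian group with a Hausdorff topology, via type classes), scalar multiplication is
  the explicit operation smul, and addition and scalar multiplication are jointly continuous.\<close>
definition tvs :: "('k::real_normed_field \<Rightarrow> 'a::{ab_group_add,t2_space} \<Rightarrow> 'a) \<Rightarrow> bool" where
  "tvs smul \<longleftrightarrow> vector_space smul
     \<and> continuous_on UNIV (\<lambda>p::'a \<times> 'a. fst p + snd p)
     \<and> continuous_on UNIV (\<lambda>p::'k \<times> 'a. smul (fst p) (snd p))"

definition infinite_dimensional :: "('k::field \<Rightarrow> 'a::ab_group_add \<Rightarrow> 'a) \<Rightarrow> bool" where
  "infinite_dimensional smul \<longleftrightarrow> \<not> (\<exists>B. finite B \<and> module.span smul B = UNIV)"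

definition tdual :: "('k::real_normed_field \<Rightarrow> 'a::{ab_group_add,topological_space} \<Rightarrow> 'a) \<Rightarrow> ('a \<Rightarrow> 'k) set" where
  "tdual smul = {\<sigma>. Vector_Spaces.linear smul (*) \<sigma> \<and> continuous_on UNIV \<sigma>}"

definition dual_separates_points :: "('k::real_normed_field \<Rightarrow> 'a::{ab_group_add,topological_space} \<Rightarrow> 'a) \<Rightarrow> bool" where
  "dual_separates_points smul \<longleftrightarrow> (\<forall>x y. x \<noteq> y \<longrightarrow> (\<exists>\<sigma>\<in>tdual smul. \<sigma> x \<noteq> \<sigma> y))"

definition weak_star :: "('k::real_normed_field \<Rightarrow> 'a::{ab_group_add,topological_space} \<Rightarrow> 'a) \<Rightarrow> ('a \<Rightarrow> 'k) topology" where
  "weak_star smul = subtopology (product_topology (\<lambda>_. euclidean) UNIV) (tdual smul)"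

definition hyperspace :: "('k::real_normed_field \<Rightarrow> 'a::{ab_group_add,topological_space} \<Rightarrow> 'a) \<Rightarrow> ('a \<Rightarrow> 'k) set set" where
  "hyperspace smul = {F. F \<noteq> {} \<and> closedin (weak_star smul) F}"

definition dH :: "'a \<Rightarrow> ('a \<Rightarrow> 'k::real_normed_field) set \<Rightarrow> ('a \<Rightarrow> 'k) set \<Rightarrow> ereal" where
  "dH A F G = max (SUP \<sigma>\<in>F. INF \<tau>\<in>G. ereal (norm ((\<sigma> - \<tau>) A)))
                  (SUP \<tau>\<in>G. INF \<sigma>\<in>F. ereal (norm ((\<sigma> - \<tau>) A)))"

definition weak_star_hausdorff_hypertopology ::
  "('k::real_normed_field \<Rightarrow> 'a::{ab_group_add,topological_space} \<Rightarrow> 'a) \<Rightarrow> ('a \<Rightarrow> 'k) set topology" where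
  "weak_star_hausdorff_hypertopology smul =
     subtopology
       (topology_generated_by
         {{G \<in> hyperspace smul. dH A F G < ereal r} | A F r. F \<in> hyperspace smul \<and> r > 0})
       (hyperspace smul)"

end

theory Submission
  imports Defs
begin

lemma vs_self: "vector_space ((*) :: 'k::field \<Rightarrow> 'k \<Rightarrow> 'k)"
  by (rule vector_space_over_itself.vector_space_axioms)

lemma tdual_zero:
  fixes smul :: "'k::real_normed_field \<Rightarrow> 'a::{ab_group_add,topological_space} \<Rightarrow> 'a"
  assumes "vector_space smul"
  shows "(\<lambda>x. 0) \<in> tdual smul"
  using assms vs_self unfolding tdual_def by (auto simp: Vector_Spaces.linear_iff)

lemma tdual_comb:
  fixes smul :: "'k::real_normed_field \<Rightarrow> 'a::{ab_group_add,topological_space} \<Rightarrow> 'a"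
  assumes "\<sigma> \<in> tdual smul" "\<tau> \<in> tdual smul"
  shows "(\<lambda>x. \<sigma> x - c * \<tau> x) \<in> tdual smul"
proof -
  have l1: "Vector_Spaces.linear smul (*) \<sigma>" and l2: "Vector_Spaces.linear smul (*) \<tau>"
    and c1: "continuous_on UNIV \<sigma>" and c2: "continuous_on UNIV \<tau>"
    using assms unfolding tdual_def by auto
  have "Vector_Spaces.linear smul (*) (\<lambda>x. \<sigma> x - c * \<tau> x)"
    using l1 l2 unfolding Vector_Spaces.linear_iff by (auto simp: algebra_simps)
  moreover have "continuous_on UNIV (\<lambda>x. \<sigma> x - c * \<tau> x)"
    by (intro continuous_intros c1 c2)
  ultimately show ?thesis unfolding tdual_def by auto
qed

lemma tdual_span0:
  fixes smul :: "'k::real_normed_field \<Rightarrow> 'a::{ab_group_add,topological_space} \<Rightarrow> 'a"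
  assumes vs: "vector_space smul" and s: "\<sigma> \<in> tdual smul" and z: "\<forall>a\<in>A. \<sigma> a = 0"
    and x: "x \<in> module.span smul A"
  shows "\<sigma> x = 0"
proof -
  interpret vector_space smul by (rule vs)
  have l: "Vector_Spaces.linear smul (*) \<sigma>" using s unfolding tdual_def by auto
  have sub: "subspace {y. \<sigma> y = 0}"
    unfolding subspace_def using l unfolding Vector_Spaces.linear_iff
    by (auto dest: spec[of _ 0] simp: algebra_simps)
  show ?thesis using span_induct[OF x sub] z by auto
qed

lemma tdual_sep:
  fixes smul :: "'k::real_normed_field \<Rightarrow> 'a::{ab_group_add,topological_space} \<Rightarrow> 'a"
  assumes vs: "vector_space smul" and sep: "dual_separates_points smul" and fin: "finite A"
  shows "x \<notin> module.span smul A \<Longrightarrow> \<exists>\<sigma>\<in>tdual smul. (\<forall>a\<in>A. \<sigma> a = 0) \<and> \<sigma> x \<noteq> 0"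
  using fin
proof (induction A arbitrary: x rule: finite_induct)
  interpret vector_space smul by (rule vs)
  case empty
  then have "x \<noteq> 0" by auto
  then obtain \<sigma> where s: "\<sigma> \<in> tdual smul" "\<sigma> x \<noteq> \<sigma> 0"
    using sep unfolding dual_separates_points_def by blast
  have add: "\<sigma> (0 + 0) = \<sigma> 0 + \<sigma> 0" using s(1) unfolding tdual_def Vector_Spaces.linear_iff
    by blast
  have "\<sigma> 0 = 0" using add by simp
  then show ?case using s by auto
next
  interpret vector_space smul by (rule vs)
  case (insert a A x)
  show ?case
  proof (cases "a \<in> span A")
    case True
    then have "span (insert a A) = span A" by (rule span_redundant)
    then obtain \<sigma> where s: "\<sigma> \<in> tdual smul" "\<forall>b\<in>A. \<sigma> b = 0" "\<sigma> x \<noteq> 0"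
      using insert.IH[of x] insert.prems \<open>span (insert a A) = span A\<close> by blast
    have "\<sigma> a = 0" using tdual_span0[OF vs s(1) s(2) True] .
    then show ?thesis using s by auto
  next
    case False
    obtain \<sigma>a where sa: "\<sigma>a \<in> tdual smul" "\<forall>b\<in>A. \<sigma>a b = 0" "\<sigma>a a \<noteq> 0"
      using insert.IH[OF False] by auto
    define c where "c = \<sigma>a x / \<sigma>a a"
    have "x - smul c a \<notin> span A"
    proof
      assume "x - smul c a \<in> span A"
      then have h1: "x - smul c a \<in> span (insert a A)"
        using span_mono[of A "insert a A"] by auto
      have h2: "smul c a \<in> span (insert a A)" by (intro span_scale span_base) simp
      have "(x - smul c a) + smul c a \<in> span (insert a A)"
        using span_add[OF h1 h2] .
      then show False using insert.prems by simp
    qed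
    then obtain \<sigma> where s: "\<sigma> \<in> tdual smul" "\<forall>b\<in>A. \<sigma> b = 0" "\<sigma> (x - smul c a) \<noteq> 0"
      using insert.IH by blast
    define \<tau> where "\<tau> = (\<lambda>y. \<sigma> y - (\<sigma> a / \<sigma>a a) * \<sigma>a y)"
    have t: "\<tau> \<in> tdual smul" unfolding \<tau>_def by (rule tdual_comb[OF s(1) sa(1)])
    have ls: "Vector_Spaces.linear smul (*) \<sigma>" using s(1) unfolding tdual_def by auto
    have e1: "\<sigma> ((x - smul c a) + smul c a) = \<sigma> (x - smul c a) + \<sigma> (smul c a)"
      using ls unfolding Vector_Spaces.linear_iff by blast
    have e2: "\<sigma> (smul c a) = c * \<sigma> a"
      using ls unfolding Vector_Spaces.linear_iff by blast
    have "\<sigma> (x - smul c a) = \<sigma> x - c * \<sigma> a"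
      using e1 e2 by simp
    moreover have "\<tau> x = \<sigma> x - c * \<sigma> a" unfolding \<tau>_def c_def using sa(3) by (simp add: field_simps)
    moreover have "\<tau> a = 0" unfolding \<tau>_def using sa(3) by simp
    moreover have "\<forall>b\<in>A. \<tau> b = 0" unfolding \<tau>_def using s(2) sa(2) by simp
    ultimately show ?thesis using t s(3) by auto
  qed
qed

definition hd :: "'a \<Rightarrow> ('a \<Rightarrow> 'k::real_normed_field) set \<Rightarrow> ('a \<Rightarrow> 'k) set \<Rightarrow> ereal" where
  "hd A F G = (SUP \<sigma>\<in>F. INF \<tau>\<in>G. ereal (norm (\<sigma> A - \<tau> A)))"

lemma dH_hd: "dH A F G = max (hd A F G) (hd A G F)"
  unfolding dH_def hd_def by (simp add: norm_minus_commute)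

lemma hd_nonneg: "F \<noteq> {} \<Longrightarrow> 0 \<le> hd A F G"
proof -
  assume "F \<noteq> {}"
  then obtain \<sigma> where "\<sigma> \<in> F" by auto
  have "0 \<le> (INF \<tau>\<in>G. ereal (norm (\<sigma> A - \<tau> A)))"
    by (rule INF_greatest) simp
  also have "\<dots> \<le> (SUP \<sigma>\<in>F. INF \<tau>\<in>G. ereal (norm (\<sigma> A - \<tau> A)))"
    using \<open>\<sigma> \<in> F\<close> by (rule SUP_upper)
  finally show ?thesis unfolding hd_def .
qed

lemma hd_self: "hd A F F \<le> 0"
  unfolding hd_def
  by (rule SUP_least, rule INF_lower2) auto

lemma dH_nonneg: "F \<noteq> {} \<Longrightarrow> 0 \<le> dH A F G"
  using hd_nonneg[of F A G] unfolding dH_hd by (simp add: le_max_iff_disj)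

lemma dH_self: "dH A F F \<le> 0"
  unfolding dH_hd using hd_self by simp

lemma dH_sym: "dH A F G = dH A G F"
  unfolding dH_hd by (simp add: max.commute)

lemma ereal_le_inf: "(z::ereal) = \<infinity> \<Longrightarrow> w \<le> z" by simp
lemma ereal_sum_fin: "0 \<le> (x::ereal) \<Longrightarrow> 0 \<le> y \<Longrightarrow> x + y \<noteq> \<infinity> \<Longrightarrow> x \<noteq> \<infinity> \<and> y \<noteq> \<infinity>"
  by (cases x; cases y) auto
lemma ereal_fin_obtain: "0 \<le> (x::ereal) \<Longrightarrow> x \<noteq> \<infinity> \<Longrightarrow> \<exists>p. x = ereal p"
  by (cases x) auto

lemma ereal_add_fin: "(x::ereal) < \<infinity> \<Longrightarrow> y < \<infinity> \<Longrightarrow> x + y < \<infinity>"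
  by (cases x; cases y) auto

lemma hd_tri:
  assumes F: "F \<noteq> {}" and G: "G \<noteq> {}"
  shows "hd A F K \<le> hd A F G + hd A G K"
proof -
  have n1: "0 \<le> hd A F G" by (rule hd_nonneg[OF F])
  have n2: "0 \<le> hd A G K" by (rule hd_nonneg[OF G])
  show ?thesis
proof (cases "hd A F G + hd A G K = \<infinity>")
  case True then show ?thesis by (rule ereal_le_inf)
next
  case False
  obtain p where p: "hd A F G = ereal p"
    using ereal_fin_obtain[OF n1] ereal_sum_fin[OF n1 n2 False] by blast
  obtain q where q: "hd A G K = ereal q"
    using ereal_fin_obtain[OF n2] ereal_sum_fin[OF n1 n2 False] by blast
  have "hd A F K \<le> ereal (p + q)"
    unfolding hd_def
  proof (rule SUP_least)
    fix \<sigma> assume s: "\<sigma> \<in> F"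
    show "(INF \<kappa>\<in>K. ereal (norm (\<sigma> A - \<kappa> A))) \<le> ereal (p + q)"
    proof (rule ereal_le_epsilon2)
      fix e :: real assume e: "0 < e"
      have "(INF \<tau>\<in>G. ereal (norm (\<sigma> A - \<tau> A))) \<le> hd A F G"
        unfolding hd_def using s by (rule SUP_upper)
      moreover have "hd A F G < ereal (p + e/2)" using p e by simp
      ultimately have "(INF \<tau>\<in>G. ereal (norm (\<sigma> A - \<tau> A))) < ereal (p + e/2)"
        by (rule le_less_trans)
      then obtain \<tau> where t1: "\<tau> \<in> G" and t2': "ereal (norm (\<sigma> A - \<tau> A)) < ereal (p + e/2)"
        unfolding INF_less_iff by blast
      have t2: "norm (\<sigma> A - \<tau> A) < p + e/2" using t2' by simp
      have "(INF \<kappa>\<in>K. ereal (norm (\<tau> A - \<kappa> A))) \<le> hd A G K"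
        unfolding hd_def using t1 by (rule SUP_upper)
      moreover have "hd A G K < ereal (q + e/2)" using q e by simp
      ultimately have "(INF \<kappa>\<in>K. ereal (norm (\<tau> A - \<kappa> A))) < ereal (q + e/2)"
        by (rule le_less_trans)
      then obtain \<kappa> where k1: "\<kappa> \<in> K" and k2': "ereal (norm (\<tau> A - \<kappa> A)) < ereal (q + e/2)"
        unfolding INF_less_iff by blast
      have k2: "norm (\<tau> A - \<kappa> A) < q + e/2" using k2' by simp
      have eq: "\<sigma> A - \<kappa> A = (\<sigma> A - \<tau> A) + (\<tau> A - \<kappa> A)" by simp
      have "norm (\<sigma> A - \<kappa> A) \<le> norm (\<sigma> A - \<tau> A) + norm (\<tau> A - \<kappa> A)"
        unfolding eq by (rule norm_triangle_ineq)
      then have r: "norm (\<sigma> A - \<kappa> A) \<le> p + q + e" using t2 k2 by linarith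
      have "(INF \<kappa>\<in>K. ereal (norm (\<sigma> A - \<kappa> A))) \<le> ereal (norm (\<sigma> A - \<kappa> A))"
        using k1 by (rule INF_lower)
      also have "\<dots> \<le> ereal (p + q + e)" using r by simp
      also have "\<dots> = ereal (p + q) + ereal e" by simp
      finally show "(INF \<kappa>\<in>K. ereal (norm (\<sigma> A - \<kappa> A))) \<le> ereal (p + q) + ereal e" .
    qed
  qed
  then show ?thesis unfolding p q plus_ereal.simps(1) .
qed
qed

lemma dH_tri:
  assumes F: "F \<noteq> {}" and G: "G \<noteq> {}" and K: "K \<noteq> {}"
  shows "dH A F K \<le> dH A F G + dH A G K"
proof -
  have a: "hd A F K \<le> dH A F G + dH A G K"
    using hd_tri[OF F G, of A K] add_mono[OF max.cobounded1[of "hd A F G" "hd A G F"] max.cobounded1[of "hd A G K" "hd A K G"]]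
    unfolding dH_hd by (rule order_trans)
  have b: "hd A K F \<le> dH A F G + dH A G K"
  proof -
    have "hd A K F \<le> hd A K G + hd A G F" by (rule hd_tri[OF K G])
    also have "\<dots> \<le> max (hd A G K) (hd A K G) + max (hd A F G) (hd A G F)"
      by (rule add_mono) (rule max.cobounded2)+
    also have "\<dots> = dH A F G + dH A G K" unfolding dH_hd by (rule add.commute)
    finally show ?thesis .
  qed
  show ?thesis using a b unfolding dH_hd[of A F K] by simp
qed


lemma closed_annihilator:
  fixes smul :: "'k::real_normed_field \<Rightarrow> 'a::{ab_group_add,topological_space} \<Rightarrow> 'a"
  shows "closedin (weak_star smul) {\<tau>\<in>tdual smul. \<forall>a\<in>A. \<tau> a = 0}"
proof -
  let ?P = "product_topology (\<lambda>_. (euclidean :: 'k topology)) (UNIV :: 'a set)"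
  let ?K = "insert (topspace ?P) ((\<lambda>a. {f\<in>topspace ?P. f a \<in> {0}}) ` A)"
  have "closedin ?P (\<Inter>?K)"
  proof (rule closedin_Inter)
    show "?K \<noteq> {}" by simp
    fix S assume "S \<in> ?K"
    then show "closedin ?P S"
    proof
      assume "S = topspace ?P" then show ?thesis using closedin_topspace[of ?P] by simp
    next
      assume "S \<in> (\<lambda>a. {f\<in>topspace ?P. f a \<in> {0}}) ` A"
      then obtain a where S: "S = {f\<in>topspace ?P. f a \<in> {0}}" by auto
      have cm: "continuous_map ?P euclidean (\<lambda>f. f a)"
        using continuous_map_product_projection[of a UNIV "\<lambda>_. (euclidean :: 'k topology)"] by simp
      have c0: "closedin euclidean {0 :: 'k}" using closed_singleton[of "0::'k"] unfolding closed_closedin .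
      show ?thesis unfolding S by (rule closedin_continuous_map_preimage[OF cm c0])
    qed
  qed
  moreover have "{\<tau>\<in>tdual smul. \<forall>a\<in>A. \<tau> a = 0} = (\<Inter>?K) \<inter> tdual smul"
    by auto
  ultimately show ?thesis unfolding weak_star_def closedin_subtopology by blast
qed

lemma hyper_ne: "F \<in> hyperspace smul \<Longrightarrow> F \<noteq> {}"
  unfolding hyperspace_def by auto

lemma nbhd:
  fixes smul :: "'k::real_normed_field \<Rightarrow> 'a::{ab_group_add,topological_space} \<Rightarrow> 'a"
  assumes "generate_topology_on
       {{G \<in> hyperspace smul. dH A F G < ereal r} | A F r. F \<in> hyperspace smul \<and> r > 0} U"
  shows "F0 \<in> U \<Longrightarrow> F0 \<in> hyperspace smul \<Longrightarrow>
    \<exists>A e. finite A \<and> 0 < e \<and> (\<forall>G\<in>hyperspace smul. (\<forall>a\<in>A. dH a F0 G < ereal e) \<longrightarrow> G \<in> U)"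
  using assms
proof (induction rule: generate_topology_on.induct)
  case Empty
  then show ?case by simp
next
  case (Int a b)
  then obtain A1 e1 A2 e2 where 1: "finite A1" "0 < e1" "\<forall>G\<in>hyperspace smul. (\<forall>x\<in>A1. dH x F0 G < ereal e1) \<longrightarrow> G \<in> a"
    and 2: "finite A2" "0 < e2" "\<forall>G\<in>hyperspace smul. (\<forall>x\<in>A2. dH x F0 G < ereal e2) \<longrightarrow> G \<in> b"
    by auto
  show ?case
  proof (intro exI conjI ballI impI)
    show "finite (A1 \<union> A2)" using 1 2 by simp
    show "0 < min e1 e2" using 1 2 by simp
    fix G assume G: "G \<in> hyperspace smul" "\<forall>x\<in>A1 \<union> A2. dH x F0 G < ereal (min e1 e2)"
    have "\<forall>x\<in>A1. dH x F0 G < ereal e1" using G(2) by (auto intro: less_le_trans)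
    moreover have "\<forall>x\<in>A2. dH x F0 G < ereal e2" using G(2) by (auto intro: less_le_trans)
    ultimately show "G \<in> a \<inter> b" using 1 2 G(1) by auto
  qed
next
  case (UN K)
  then obtain k where k: "k \<in> K" "F0 \<in> k" by auto
  then obtain A e where "finite A" "0 < e" "\<forall>G\<in>hyperspace smul. (\<forall>x\<in>A. dH x F0 G < ereal e) \<longrightarrow> G \<in> k"
    using UN by blast
  then show ?case using k by blast
next
  case (Basis s)
  then obtain a F r where s: "s = {G \<in> hyperspace smul. dH a F G < ereal r}" "F \<in> hyperspace smul" "r > 0"
    by auto
  have d: "dH a F F0 < ereal r" using Basis s by auto
  have "0 \<le> dH a F F0" by (rule dH_nonneg[OF hyper_ne[OF s(2)]])
  with d obtain d' where d': "dH a F F0 = ereal d'" "d' < r"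
    by (cases "dH a F F0") auto
  show ?case
  proof (intro exI conjI ballI impI)
    show "finite {a}" by simp
    show "0 < r - d'" using d' by simp
    fix G assume G: "G \<in> hyperspace smul" "\<forall>x\<in>{a}. dH x F0 G < ereal (r - d')"
    have "0 \<le> dH a F0 G" by (rule dH_nonneg[OF hyper_ne[OF Basis(3)]])
    with G obtain g where g: "dH a F0 G = ereal g" "g < r - d'"
      by (cases "dH a F0 G") auto
    have "dH a F G \<le> dH a F F0 + dH a F0 G"
      by (rule dH_tri[OF hyper_ne[OF s(2)] hyper_ne[OF Basis(3)] hyper_ne[OF G(1)]])
    also have "\<dots> < ereal r" using d' g by simp
    finally show "G \<in> s" using s G by auto
  qed
qed

lemma main_generic:
  fixes smul :: "'k::real_normed_field \<Rightarrow> 'a::{ab_group_add,t2_space} \<Rightarrow> 'a"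
  assumes tv: "tvs smul" and inf: "infinite_dimensional smul" and sep: "dual_separates_points smul"
  shows "\<not> locally_connected_space (weak_star_hausdorff_hypertopology smul)"
proof
  assume lc: "locally_connected_space (weak_star_hausdorff_hypertopology smul)"
  have vs: "vector_space smul" using tv unfolding tvs_def by auto
  define H where "H = hyperspace smul"
  define Sb where "Sb = {{G \<in> hyperspace smul. dH A F G < ereal r} | A F r. F \<in> hyperspace smul \<and> r > 0}"
  define W where "W = weak_star_hausdorff_hypertopology smul"
  have W: "W = subtopology (topology_generated_by Sb) H"
    unfolding W_def Sb_def H_def weak_star_hausdorff_hypertopology_def by simp
  have ball_open: "openin (topology_generated_by Sb) {G \<in> H. dH B F G < ereal r}"
    if "F \<in> H" "r > 0" for B F r
    unfolding openin_topology_generated_by_iff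
    by (rule generate_topology_on.Basis) (use that in \<open>auto simp: Sb_def H_def\<close>)
  have self_ball: "F \<in> {G \<in> H. dH B F G < ereal 1}" if "F \<in> H" for B F
    using that dH_self[of B F] by (simp add: le_less_trans)
  have topW: "topspace W = H"
  proof -
    have "H \<subseteq> topspace (topology_generated_by Sb)"
    proof
      fix F assume "F \<in> H"
      then show "F \<in> topspace (topology_generated_by Sb)"
        using self_ball[of F] ball_open[of F 1] openin_subset by fastforce
    qed
    then show ?thesis unfolding W by auto
  qed
  define F0 :: "('a \<Rightarrow> 'k) set" where "F0 = {\<tau>\<in>tdual smul. \<forall>a\<in>UNIV. \<tau> a = 0}"
  have z: "(\<lambda>x. 0) \<in> tdual smul" by (rule tdual_zero[OF vs])
  have F0_eq: "F0 = {\<lambda>x. 0}" unfolding F0_def using z by auto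
  have F0H: "F0 \<in> H" unfolding H_def hyperspace_def using closed_annihilator[of smul UNIV] F0_eq
    unfolding F0_def by auto
  have clopen: "closedin W {G\<in>H. dH B F0 G < \<infinity>} \<and> openin W {G\<in>H. dH B F0 G < \<infinity>}" for B
  proof -
    let ?C = "{G\<in>H. dH B F0 G < \<infinity>}"
    let ?D = "{G\<in>H. dH B F0 G = \<infinity>}"
    have oC: "openin W ?C"
    proof -
      let ?T = "\<Union>{{G'\<in>H. dH B G G' < ereal 1} | G. G \<in> ?C}"
      have "openin (topology_generated_by Sb) ?T"
        by (rule openin_Union) (use ball_open in auto)
      moreover have "?C = ?T \<inter> H"
      proof
        show "?C \<subseteq> ?T \<inter> H"
        proof
          fix G assume G: "G \<in> ?C"
          then have "G \<in> H" by simp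
          then have g1: "G \<in> {G'\<in>H. dH B G G' < ereal 1}" by (rule self_ball)
          have g2: "{G'\<in>H. dH B G G' < ereal 1} \<in> {{G'\<in>H. dH B G G' < ereal 1} | G. G \<in> ?C}"
            using G by blast
          show "G \<in> ?T \<inter> H" using UnionI[OF g2 g1] \<open>G \<in> H\<close> by (rule IntI)
        qed
        show "?T \<inter> H \<subseteq> ?C"
        proof
          fix G' assume "G' \<in> ?T \<inter> H"
          then obtain G where G: "G \<in> H" "dH B F0 G < \<infinity>" "dH B G G' < ereal 1" "G' \<in> H" by auto
          have ne: "F0 \<noteq> {}" "G \<noteq> {}" "G' \<noteq> {}" using hyper_ne G F0H unfolding H_def by auto
          have "dH B F0 G' \<le> dH B F0 G + dH B G G'"
            by (rule dH_tri[OF ne])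
          also have "\<dots> < \<infinity>"
            by (rule ereal_add_fin) (use G in \<open>auto intro: less_trans\<close>)
          finally show "G' \<in> ?C" using G by auto
        qed
      qed
      ultimately show ?thesis unfolding W openin_subtopology by blast
    qed
    have oD: "openin W ?D"
    proof -
      let ?T = "\<Union>{{G'\<in>H. dH B G G' < ereal 1} | G. G \<in> ?D}"
      have "openin (topology_generated_by Sb) ?T"
        by (rule openin_Union) (use ball_open in auto)
      moreover have "?D = ?T \<inter> H"
      proof
        show "?D \<subseteq> ?T \<inter> H"
        proof
          fix G assume G: "G \<in> ?D"
          then have "G \<in> H" by simp
          then have g1: "G \<in> {G'\<in>H. dH B G G' < ereal 1}" by (rule self_ball)
          have g2: "{G'\<in>H. dH B G G' < ereal 1} \<in> {{G'\<in>H. dH B G G' < ereal 1} | G. G \<in> ?D}"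
            using G by blast
          show "G \<in> ?T \<inter> H" using UnionI[OF g2 g1] \<open>G \<in> H\<close> by (rule IntI)
        qed
        show "?T \<inter> H \<subseteq> ?D"
        proof
          fix G' assume "G' \<in> ?T \<inter> H"
          then obtain G where G: "G \<in> H" "dH B F0 G = \<infinity>" "dH B G G' < ereal 1" "G' \<in> H" by auto
          show "G' \<in> ?D"
          proof (rule ccontr)
            assume "G' \<notin> ?D"
            then have f: "dH B F0 G' < \<infinity>" using G by (simp add: less_top)
            have ne: "F0 \<noteq> {}" "G' \<noteq> {}" "G \<noteq> {}" using hyper_ne G F0H unfolding H_def by auto
            have "dH B F0 G \<le> dH B F0 G' + dH B G' G"
              by (rule dH_tri[OF ne])
            also have "\<dots> < \<infinity>"
              by (rule ereal_add_fin[OF f]) (use G dH_sym[of B G' G] in \<open>auto intro: less_trans\<close>)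
            finally show False using G by simp
          qed
        qed
      qed
      ultimately show ?thesis unfolding W openin_subtopology by blast
    qed
    have "topspace W - ?C = ?D" unfolding topW by (auto simp: less_top)
    then have "closedin W ?C" unfolding closedin_def using oD topW by auto
    then show ?thesis using oC by blast
  qed
  obtain U V where UV: "openin W U" "connectedin W V" "F0 \<in> U" "U \<subseteq> V"
  proof -
    have nb: "neighbourhood_base_of (connectedin W) W"
      using lc unfolding locally_connected_space_def W_def .
    have "openin W (topspace W) \<and> F0 \<in> topspace W"
      using F0H topW openin_topspace[of W] by simp
    then have "\<exists>U V. openin W U \<and> connectedin W V \<and> F0 \<in> U \<and> U \<subseteq> V \<and> V \<subseteq> topspace W"
      using nb unfolding neighbourhood_base_of by blast
    then show ?thesis using that by blast
  qed
  have VC: "V \<subseteq> {G\<in>H. dH B F0 G < \<infinity>}" for B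
  proof -
    have "F0 \<in> {G\<in>H. dH B F0 G < \<infinity>}" using F0H dH_self[of B F0] by (auto intro: le_less_trans)
    moreover have "F0 \<in> V" using UV by blast
    moreover have "V \<subseteq> {G\<in>H. dH B F0 G < \<infinity>} \<or> disjnt V {G\<in>H. dH B F0 G < \<infinity>}"
      using clopen[of B] by (intro connectedin_clopen_cases[OF UV(2)]) auto
    ultimately show ?thesis unfolding disjnt_def by blast
  qed
  obtain U' where U': "openin (topology_generated_by Sb) U'" "U = U' \<inter> H"
    using UV(1) unfolding W openin_subtopology by blast
  then have gU': "generate_topology_on Sb U'" using openin_topology_generated_by_iff by blast
  obtain A e where Ae: "finite A" "0 < e" "\<forall>G\<in>H. (\<forall>a\<in>A. dH a F0 G < ereal e) \<longrightarrow> G \<in> U'"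
  proof -
    have "F0 \<in> U'" using UV(3) U'(2) by blast
    from nbhd[OF gU'[unfolded Sb_def] this F0H[unfolded H_def]] show ?thesis
      using that unfolding H_def by blast
  qed
  obtain x where x: "x \<notin> module.span smul A"
    using inf Ae(1) unfolding infinite_dimensional_def by blast
  obtain \<sigma> where s: "\<sigma> \<in> tdual smul" "\<forall>a\<in>A. \<sigma> a = 0" "\<sigma> x \<noteq> 0"
    using tdual_sep[OF vs sep Ae(1) x] by blast
  define G where "G = {\<tau>\<in>tdual smul. \<forall>a\<in>A. \<tau> a = 0}"
  have GH: "G \<in> H" unfolding H_def hyperspace_def G_def using closed_annihilator[of smul A] z by auto
  have "dH a F0 G < ereal e" if a: "a \<in> A" for a
  proof -
    have h1: "hd a F0 G \<le> 0" unfolding hd_def F0_eq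
    proof (rule SUP_least)
      fix \<sigma>' :: "'a \<Rightarrow> 'k" assume "\<sigma>' \<in> {\<lambda>x. 0}"
      then have "\<sigma>' = (\<lambda>x. 0)" by simp
      moreover have "(\<lambda>x. 0) \<in> G" unfolding G_def using z by simp
      ultimately show "(INF \<tau>\<in>G. ereal (norm (\<sigma>' a - \<tau> a))) \<le> 0"
        by (intro INF_lower2[of "\<lambda>x. 0"]) auto
    qed
    have h2: "hd a G F0 \<le> 0" unfolding hd_def F0_eq
    proof (rule SUP_least)
      fix \<tau> assume "\<tau> \<in> G"
      then have "\<tau> a = 0" using a unfolding G_def by simp
      then show "(INF \<sigma>'\<in>{\<lambda>x. 0}. ereal (norm (\<tau> a - \<sigma>' a))) \<le> 0" by simp
    qed
    have "dH a F0 G \<le> 0" unfolding dH_hd using h1 h2 by simp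
    then show ?thesis using Ae(2) by (simp add: le_less_trans)
  qed
  then have "G \<in> U" using Ae(3) GH U'(2) by auto
  then have fin: "dH x F0 G < \<infinity>" using VC[of x] UV(4) by auto
  have "dH x F0 G = \<infinity>"
  proof -
    have mem: "(\<lambda>y. 0 - of_real r * \<sigma> y) \<in> G" for r
      using tdual_comb[OF z s(1), of "of_real r"] s(2) unfolding G_def by auto
    have "(SUP \<tau>\<in>G. INF \<sigma>'\<in>F0. ereal (norm ((\<sigma>' - \<tau>) x))) = (top :: ereal)"
      unfolding F0_eq
    proof (rule SUP_eq_top_iff[THEN iffD2], intro allI impI)
      fix y :: ereal assume "y < top"
      then obtain n :: nat where n: "y < ereal (real n)"
        using less_PInf_Ex_of_nat[of y] by auto
      show "\<exists>i\<in>G. y < (INF \<sigma>'\<in>{\<lambda>x. 0}. ereal (norm ((\<sigma>' - i) x)))"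
      proof (intro bexI)
        show "(\<lambda>y. 0 - of_real (real n / norm (\<sigma> x)) * \<sigma> y) \<in> G" by (rule mem)
        have e1: "norm ((0 - of_real (real n / norm (\<sigma> x)) * \<sigma> x)) = \<bar>real n / norm (\<sigma> x)\<bar> * norm (\<sigma> x)"
          by (simp only: diff_0 norm_minus_cancel norm_mult norm_of_real)
        have e2: "\<bar>real n / norm (\<sigma> x)\<bar> * norm (\<sigma> x) = real n"
          using s(3) by simp
        have "norm ((0 - of_real (real n / norm (\<sigma> x)) * \<sigma> x)) = real n"
          using e1 e2 by simp
        then show "y < (INF \<sigma>'\<in>{\<lambda>x. 0}. ereal (norm ((\<sigma>' - (\<lambda>y. 0 - of_real (real n / norm (\<sigma> x)) * \<sigma> y)) x)))"
          using n by simp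
      qed
    qed
    then show ?thesis unfolding dH_def top_ereal_def by simp
  qed
  then show False using fin by simp
qed


theorem corollary3p5:
  fixes scaleR' :: "real \<Rightarrow> 'a::{ab_group_add,t2_space} \<Rightarrow> 'a"
    and scaleC' :: "complex \<Rightarrow> 'a \<Rightarrow> 'a"
  shows "(tvs scaleR' \<and> infinite_dimensional scaleR' \<and> dual_separates_points scaleR'
            \<longrightarrow> \<not> locally_connected_space (weak_star_hausdorff_hypertopology scaleR'))
       \<and> (tvs scaleC' \<and> infinite_dimensional scaleC' \<and> dual_separates_points scaleC'
            \<longrightarrow> \<not> locally_connected_space (weak_star_hausdorff_hypertopology scaleC'))"
    using main_generic[of scaleR'] main_generic[of scaleC'] by blast

end
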